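(* For any $d\ge0$, $k\ge2$ and $\theta\in(0,1]$ such that $k\theta^2>2$, $$\mathbb{P}\Big[\sum_{i\in L_d}X^{(d)}_i\le k^d/2\ \Big|\ X^{(0)}=1\Big]\le \frac{1}{\theta^2k-1}.$$
   Context: Broadcast (Ising) tree model: complete $k$-ary tree of depth $d$ with root $\rho$; $L_d$ = leaves; $\sigma_\rho$ uniform on $\{0,1\}$; each child $v$ of $u$ independently has $\sigma_v=\sigma_u$ with probability $(1+\theta)/2$ and $1-\sigma_u$ otherwise; $X^{(r)}=(\sigma_v)_{v\in L_r}$. *)

theory Defs
  imports Main "HOL-Library.FuncSet" Complex_Main
begin

text \<open>Complete k-ary tree of depth d: vertices are words over {0..<k} of length at most d;
  the root is [] and the children of u are i # u for i < k. Leaves L_d are the words of length d.\<close>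

definition tree_vertices :: "nat \<Rightarrow> nat \<Rightarrow> nat list set" where
  "tree_vertices k d = {v. length v \<le> d \<and> set v \<subseteq> {..<k}}"

definition tree_leaves :: "nat \<Rightarrow> nat \<Rightarrow> nat list set" where
  "tree_leaves k d = {v. length v = d \<and> set v \<subseteq> {..<k}}"

definition labelings :: "nat \<Rightarrow> nat \<Rightarrow> (nat list \<Rightarrow> nat) set" where
  "labelings k d = PiE (tree_vertices k d) (\<lambda>_. {0, 1})"

definition edge_prob :: "real \<Rightarrow> nat \<Rightarrow> nat \<Rightarrow> real" where
  "edge_prob \<theta> a b = (if a = b then (1 + \<theta>) / 2 else (1 - \<theta>) / 2)"

text \<open>Probability of a configuration in the broadcast model (uniform root spin).
  The parent of a non-root vertex v is tl v.\<close>
definition broadcast_weight :: "nat \<Rightarrow> nat \<Rightarrow> real \<Rightarrow> (nat list \<Rightarrow> nat) \<Rightarrow> real" where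
  "broadcast_weight k d \<theta> \<sigma> =
     (1/2) * (\<Prod>v \<in> tree_vertices k d - {[]}. edge_prob \<theta> (\<sigma> (tl v)) (\<sigma> v))"

definition broadcast_prob :: "nat \<Rightarrow> nat \<Rightarrow> real \<Rightarrow> ((nat list \<Rightarrow> nat) \<Rightarrow> bool) \<Rightarrow> real" where
  "broadcast_prob k d \<theta> E = (\<Sum>\<sigma> \<in> {\<sigma> \<in> labelings k d. E \<sigma>}. broadcast_weight k d \<theta> \<sigma>)"

definition broadcast_cond_prob ::
  "nat \<Rightarrow> nat \<Rightarrow> real \<Rightarrow> ((nat list \<Rightarrow> nat) \<Rightarrow> bool) \<Rightarrow> ((nat list \<Rightarrow> nat) \<Rightarrow> bool) \<Rightarrow> real" where
  "broadcast_cond_prob k d \<theta> E F =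
     broadcast_prob k d \<theta> (\<lambda>\<sigma>. E \<sigma> \<and> F \<sigma>) / broadcast_prob k d \<theta> F"

end

theory Submission
  imports Defs
begin

lemma fin_V: "finite (tree_vertices k d)"
proof -
  have "tree_vertices k d = {xs. set xs \<subseteq> {..<k} \<and> length xs \<le> d}"
    unfolding tree_vertices_def by auto
  then show ?thesis using finite_lists_length_le[of "{..<k}" d] by simp
qed

lemma L_sub_V: "tree_leaves k d \<subseteq> tree_vertices k d"
  unfolding tree_leaves_def tree_vertices_def by auto

lemma fin_L: "finite (tree_leaves k d)"
  using finite_subset[OF L_sub_V fin_V] .

lemma V_Suc: "tree_vertices k (Suc d) = tree_vertices k d \<union> tree_leaves k (Suc d)"
  unfolding tree_leaves_def tree_vertices_def by auto

lemma V_L_disj: "tree_vertices k d \<inter> tree_leaves k (Suc d) = {}"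
  unfolding tree_leaves_def tree_vertices_def by auto

lemma L_Suc: "tree_leaves k (Suc d) = (\<lambda>(i,u). i # u) ` ({..<k} \<times> tree_leaves k d)"
proof (rule set_eqI)
  fix v show "v \<in> tree_leaves k (Suc d) \<longleftrightarrow> v \<in> (\<lambda>(i,u). i # u) ` ({..<k} \<times> tree_leaves k d)"
    unfolding tree_leaves_def by (cases v) auto
qed

lemma inj_cons: "inj_on (\<lambda>(i::nat,u). i # u) A"
  by (auto simp: inj_on_def)

lemma sum_L_Suc:
  fixes h :: "nat list \<Rightarrow> real"
  shows "(\<Sum>v\<in>tree_leaves k (Suc d). h (tl v)) = real k * (\<Sum>u\<in>tree_leaves k d. h u)"
proof -
  have "(\<Sum>v\<in>tree_leaves k (Suc d). h (tl v)) = (\<Sum>p\<in>{..<k} \<times> tree_leaves k d. h (tl ((\<lambda>(i,u). i # u) p)))"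
    unfolding L_Suc by (subst sum.reindex[OF inj_cons]) (simp add: o_def)
  also have "\<dots> = (\<Sum>(i,u)\<in>{..<k} \<times> tree_leaves k d. h u)"
    by (simp add: case_prod_beta)
  also have "\<dots> = (\<Sum>i<k. \<Sum>u\<in>tree_leaves k d. h u)"
    by (rule sum.cartesian_product[symmetric])
  finally show ?thesis by simp
qed

lemma card_L: "card (tree_leaves k d) = k ^ d"
proof (induction d)
  case 0
  have "tree_leaves k 0 = {[]}" unfolding tree_leaves_def by auto
  then show ?case by simp
next
  case (Suc d)
  then show ?case unfolding L_Suc
    by (simp add: card_image[OF inj_cons] card_cartesian_product)
qed

lemma tl_L_in_V: "v \<in> tree_leaves k (Suc d) \<Longrightarrow> tl v \<in> tree_vertices k d"
  unfolding tree_leaves_def tree_vertices_def by (cases v) auto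

lemma tl_V_in_V: "v \<in> tree_vertices k d \<Longrightarrow> tl v \<in> tree_vertices k d"
  unfolding tree_vertices_def by (cases v) auto

lemma root_V: "[] \<in> tree_vertices k d"
  unfolding tree_vertices_def by auto

lemma root_notin_L: "[] \<notin> tree_leaves k (Suc d)"
  unfolding tree_leaves_def by auto

lemma PiE_split_sum:
  fixes F :: "('a \<Rightarrow> 'b) \<Rightarrow> real"
  assumes "A \<inter> B = {}"
  shows "(\<Sum>\<sigma>\<in>PiE (A \<union> B) S. F \<sigma>) = (\<Sum>\<tau>\<in>PiE A S. \<Sum>\<eta>\<in>PiE B S. F (\<lambda>v. if v\<in>A then \<tau> v else \<eta> v))"
proof -
  let ?m = "\<lambda>(\<tau>,\<eta>). (\<lambda>v. if v\<in>A then \<tau> v else \<eta> v)"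
  have bij: "bij_betw ?m (PiE A S \<times> PiE B S) (PiE (A \<union> B) S)"
  proof (rule bij_betwI')
    fix x y assume x: "x \<in> PiE A S \<times> PiE B S" and y: "y \<in> PiE A S \<times> PiE B S"
    show "(?m x = ?m y) = (x = y)"
    proof
      assume eq: "?m x = ?m y"
      obtain t1 e1 where x1: "x = (t1,e1)" by (cases x)
      obtain t2 e2 where y1: "y = (t2,e2)" by (cases y)
      have "t1 = t2"
      proof
        fix v show "t1 v = t2 v"
          using fun_cong[OF eq, of v] x y x1 y1 by (cases "v \<in> A") (auto simp: PiE_def extensional_def)
      qed
      moreover have "e1 = e2"
      proof
        fix v show "e1 v = e2 v"
          using fun_cong[OF eq, of v] x y x1 y1 assms by (cases "v \<in> A"; cases "v \<in> B") (auto simp: PiE_def extensional_def)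
      qed
      ultimately show "x = y" using x1 y1 by simp
    qed simp
  next
    fix x assume "x \<in> PiE A S \<times> PiE B S"
    then show "?m x \<in> PiE (A \<union> B) S"
      by (auto simp: PiE_def extensional_def Pi_def split: prod.splits)
  next
    fix y assume y: "y \<in> PiE (A \<union> B) S"
    show "\<exists>x\<in>PiE A S \<times> PiE B S. y = ?m x"
    proof (intro bexI)
      show "y = ?m (restrict y A, restrict y B)" using y
        by (auto simp: PiE_def extensional_def fun_eq_iff)
      show "(restrict y A, restrict y B) \<in> PiE A S \<times> PiE B S" using y by auto
    qed
  qed
  have "(\<Sum>\<sigma>\<in>PiE (A \<union> B) S. F \<sigma>) = (\<Sum>x\<in>PiE A S \<times> PiE B S. F (?m x))"
    using sum.reindex_bij_betw[OF bij, of F] by simp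
  also have "\<dots> = (\<Sum>\<tau>\<in>PiE A S. \<Sum>\<eta>\<in>PiE B S. F (\<lambda>v. if v\<in>A then \<tau> v else \<eta> v))"
    by (simp add: sum.cartesian_product case_prod_beta)
  finally show ?thesis .
qed

lemma prod_exp1:
  fixes p :: "'a \<Rightarrow> nat \<Rightarrow> real"
  assumes fin: "finite B" and w: "w \<in> B" and p1: "\<And>v. v\<in>B \<Longrightarrow> p v 0 + p v (Suc 0) = 1"
  shows "(\<Sum>\<eta>\<in>PiE B (\<lambda>_. {0,1}). (\<Prod>v\<in>B. p v (\<eta> v)) * f (\<eta> w)) = p w 0 * f 0 + p w (Suc 0) * f (Suc 0)"
proof -
  define q where "q v s = p v s * (if v = w then f s else 1)" for v s
  have "(\<Prod>v\<in>B. \<Sum>s\<in>{0,1}. q v s) = (\<Sum>\<eta>\<in>PiE B (\<lambda>_. {0,1}). \<Prod>v\<in>B. q v (\<eta> v))"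
    by (rule prod_sum_PiE) (use fin in auto)
  also have "\<dots> = (\<Sum>\<eta>\<in>PiE B (\<lambda>_. {0,1}). (\<Prod>v\<in>B. p v (\<eta> v)) * f (\<eta> w))"
    unfolding q_def prod.distrib using fin w by (intro sum.cong refl) simp
  finally have 1: "(\<Sum>\<eta>\<in>PiE B (\<lambda>_. {0,1}). (\<Prod>v\<in>B. p v (\<eta> v)) * f (\<eta> w)) = (\<Prod>v\<in>B. \<Sum>s\<in>{0,1}. q v s)" ..
  have "(\<Prod>v\<in>B. \<Sum>s\<in>{0,1}. q v s) = (\<Prod>v\<in>B. if v = w then p w 0 * f 0 + p w (Suc 0) * f (Suc 0) else 1)"
    by (rule prod.cong) (use p1 in \<open>auto simp: q_def\<close>)
  also have "\<dots> = p w 0 * f 0 + p w (Suc 0) * f (Suc 0)" using fin w by simp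
  finally show ?thesis using 1 by simp
qed

lemma prod_exp2:
  fixes p :: "'a \<Rightarrow> nat \<Rightarrow> real"
  assumes fin: "finite B" and w: "w \<in> B" and w': "w' \<in> B" and ne: "w \<noteq> w'"
    and p1: "\<And>v. v\<in>B \<Longrightarrow> p v 0 + p v (Suc 0) = 1"
  shows "(\<Sum>\<eta>\<in>PiE B (\<lambda>_. {0,1}). (\<Prod>v\<in>B. p v (\<eta> v)) * (f (\<eta> w) * g (\<eta> w')))
     = (p w 0 * f 0 + p w (Suc 0) * f (Suc 0)) * (p w' 0 * g 0 + p w' (Suc 0) * g (Suc 0))"
proof -
  define q where "q v s = p v s * (if v = w then f s else 1) * (if v = w' then g s else 1)" for v s
  have "(\<Prod>v\<in>B. \<Sum>s\<in>{0,1}. q v s) = (\<Sum>\<eta>\<in>PiE B (\<lambda>_. {0,1}). \<Prod>v\<in>B. q v (\<eta> v))"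
    by (rule prod_sum_PiE) (use fin in auto)
  also have "\<dots> = (\<Sum>\<eta>\<in>PiE B (\<lambda>_. {0,1}). (\<Prod>v\<in>B. p v (\<eta> v)) * (f (\<eta> w) * g (\<eta> w')))"
    unfolding q_def prod.distrib using fin w w' by (intro sum.cong refl) simp
  finally have 1: "(\<Sum>\<eta>\<in>PiE B (\<lambda>_. {0,1}). (\<Prod>v\<in>B. p v (\<eta> v)) * (f (\<eta> w) * g (\<eta> w'))) = (\<Prod>v\<in>B. \<Sum>s\<in>{0,1}. q v s)" ..
  have "(\<Prod>v\<in>B. \<Sum>s\<in>{0,1}. q v s) = (\<Prod>v\<in>B. (if v = w then p w 0 * f 0 + p w (Suc 0) * f (Suc 0) else 1) *
            (if v = w' then p w' 0 * g 0 + p w' (Suc 0) * g (Suc 0) else 1))"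
    by (rule prod.cong) (use ne p1 in \<open>auto simp: q_def\<close>)
  also have "\<dots> = (p w 0 * f 0 + p w (Suc 0) * f (Suc 0)) * (p w' 0 * g 0 + p w' (Suc 0) * g (Suc 0))"
    unfolding prod.distrib using fin w w' by simp
  finally show ?thesis using 1 by simp
qed

lemma prod_exp0:
  fixes p :: "'a \<Rightarrow> nat \<Rightarrow> real"
  assumes fin: "finite B" and p1: "\<And>v. v\<in>B \<Longrightarrow> p v 0 + p v (Suc 0) = 1"
  shows "(\<Sum>\<eta>\<in>PiE B (\<lambda>_. {0,1}). (\<Prod>v\<in>B. p v (\<eta> v))) = 1"
proof -
  have "(\<Prod>v\<in>B. \<Sum>s\<in>{0,1}. p v s) = (\<Sum>\<eta>\<in>PiE B (\<lambda>_. {0,1}). \<Prod>v\<in>B. p v (\<eta> v))"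
    by (rule prod_sum_PiE) (use fin in auto)
  moreover have "(\<Prod>v\<in>B. \<Sum>s\<in>{0,1}. p v s) = 1" by (rule prod.neutral) (simp add: p1)
  ultimately show ?thesis by simp
qed

definition Y :: "nat \<Rightarrow> real" where "Y s = 2 * real s - 1"

lemma ep_sum: "a \<in> {0,1} \<Longrightarrow> edge_prob \<theta> a 0 + edge_prob \<theta> a (Suc 0) = 1"
  by (auto simp: edge_prob_def add_divide_distrib[symmetric])

lemma ep_Y: "a \<in> {0,1} \<Longrightarrow> edge_prob \<theta> a 0 * Y 0 + edge_prob \<theta> a (Suc 0) * Y (Suc 0) = \<theta> * Y a"
  by (auto simp: edge_prob_def Y_def field_simps)

lemma ep_YY: "a \<in> {0,1} \<Longrightarrow> edge_prob \<theta> a 0 * (Y 0 * Y 0) + edge_prob \<theta> a (Suc 0) * (Y (Suc 0) * Y (Suc 0)) = 1"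
  by (auto simp: edge_prob_def Y_def field_simps)

lemma YY: "a \<in> {0,1} \<Longrightarrow> Y a * Y a = 1"
  by (auto simp: Y_def)

context
  fixes B :: "'a set" and a :: "'a \<Rightarrow> nat" and \<theta> :: real
  assumes fin: "finite B" and a01: "\<And>v. v \<in> B \<Longrightarrow> a v \<in> {0,1}"
begin

lemma inner0: "(\<Sum>\<eta>\<in>PiE B (\<lambda>_. {0,1}). (\<Prod>v\<in>B. edge_prob \<theta> (a v) (\<eta> v))) = 1"
  by (rule prod_exp0[OF fin]) (rule ep_sum, rule a01)

lemma inner1: "(\<Sum>\<eta>\<in>PiE B (\<lambda>_. {0,1}). (\<Prod>v\<in>B. edge_prob \<theta> (a v) (\<eta> v)) * (\<Sum>w\<in>B. Y (\<eta> w)))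
   = \<theta> * (\<Sum>w\<in>B. Y (a w))"
proof -
  have "(\<Sum>\<eta>\<in>PiE B (\<lambda>_. {0,1}). (\<Prod>v\<in>B. edge_prob \<theta> (a v) (\<eta> v)) * (\<Sum>w\<in>B. Y (\<eta> w)))
     = (\<Sum>w\<in>B. \<Sum>\<eta>\<in>PiE B (\<lambda>_. {0,1}). (\<Prod>v\<in>B. edge_prob \<theta> (a v) (\<eta> v)) * Y (\<eta> w))"
    by (simp only: sum_distrib_left, rule sum.swap)
  also have "\<dots> = (\<Sum>w\<in>B. \<theta> * Y (a w))"
    by (rule sum.cong[OF refl], subst prod_exp1[OF fin]) (auto simp: ep_sum[OF a01] ep_Y[OF a01])
  finally show ?thesis by (simp add: sum_distrib_left)
qed

lemma inner2: "(\<Sum>\<eta>\<in>PiE B (\<lambda>_. {0,1}). (\<Prod>v\<in>B. edge_prob \<theta> (a v) (\<eta> v)) * (\<Sum>w\<in>B. Y (\<eta> w))^2)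
   = \<theta>^2 * (\<Sum>w\<in>B. Y (a w))^2 + (1 - \<theta>^2) * real (card B)"
proof -
  let ?P = "\<lambda>\<eta>. (\<Prod>v\<in>B. edge_prob \<theta> (a v) (\<eta> v))"
  have "(\<Sum>\<eta>\<in>PiE B (\<lambda>_. {0,1}). ?P \<eta> * (\<Sum>w\<in>B. Y (\<eta> w))^2)
     = (\<Sum>w\<in>B. \<Sum>w'\<in>B. \<Sum>\<eta>\<in>PiE B (\<lambda>_. {0,1}). ?P \<eta> * (Y (\<eta> w) * Y (\<eta> w')))"
  proof -
    have "(\<Sum>\<eta>\<in>PiE B (\<lambda>_. {0,1}). ?P \<eta> * (\<Sum>w\<in>B. Y (\<eta> w))^2)
      = (\<Sum>\<eta>\<in>PiE B (\<lambda>_. {0,1}). \<Sum>w\<in>B. \<Sum>w'\<in>B. ?P \<eta> * (Y (\<eta> w) * Y (\<eta> w')))"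
      by (intro sum.cong refl) (simp add: power2_eq_square sum_distrib_left sum_distrib_right mult.assoc, rule sum.swap)
    also have "\<dots> = (\<Sum>w\<in>B. \<Sum>\<eta>\<in>PiE B (\<lambda>_. {0,1}). \<Sum>w'\<in>B. ?P \<eta> * (Y (\<eta> w) * Y (\<eta> w')))"
      by (rule sum.swap)
    also have "\<dots> = (\<Sum>w\<in>B. \<Sum>w'\<in>B. \<Sum>\<eta>\<in>PiE B (\<lambda>_. {0,1}). ?P \<eta> * (Y (\<eta> w) * Y (\<eta> w')))"
      by (rule sum.cong[OF refl], rule sum.swap)
    finally show ?thesis .
  qed
  also have "\<dots> = (\<Sum>w\<in>B. \<Sum>w'\<in>B. if w = w' then 1 else \<theta>^2 * (Y (a w) * Y (a w')))"
  proof (intro sum.cong refl)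
    fix w w' assume w: "w \<in> B" and w': "w' \<in> B"
    show "(\<Sum>\<eta>\<in>PiE B (\<lambda>_. {0,1}). ?P \<eta> * (Y (\<eta> w) * Y (\<eta> w'))) = (if w = w' then 1 else \<theta>^2 * (Y (a w) * Y (a w')))"
    proof (cases "w = w'")
      case True
      then show ?thesis
        using prod_exp1[OF fin w, of "\<lambda>v. edge_prob \<theta> (a v)" "\<lambda>s. Y s * Y s"]
        by (simp add: ep_sum[OF a01] ep_YY[OF a01[OF w]] ep_YY[OF a01[OF w']] w)
    next
      case False
      then show ?thesis
        using prod_exp2[OF fin w w' False, of "\<lambda>v. edge_prob \<theta> (a v)" Y Y]
        by (simp add: ep_sum[OF a01] ep_Y[OF a01] w w' power2_eq_square)
    qed
  qed
  also have "\<dots> = (\<Sum>w\<in>B. \<Sum>w'\<in>B. \<theta>^2 * (Y (a w) * Y (a w')) + (if w = w' then 1 - \<theta>^2 else 0))"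
    by (intro sum.cong refl) (auto simp: YY[OF a01])
  also have "\<dots> = \<theta>^2 * (\<Sum>w\<in>B. \<Sum>w'\<in>B. Y (a w) * Y (a w')) + (1 - \<theta>^2) * real (card B)"
    using fin by (simp add: sum.distrib sum_distrib_left)
  also have "(\<Sum>w\<in>B. \<Sum>w'\<in>B. Y (a w) * Y (a w')) = (\<Sum>w\<in>B. Y (a w))^2"
    by (simp only: power2_eq_square sum_product)
  finally show ?thesis .
qed

end

definition Wt :: "nat \<Rightarrow> nat \<Rightarrow> real \<Rightarrow> (nat list \<Rightarrow> nat) \<Rightarrow> real" where
  "Wt k d \<theta> \<sigma> = (\<Prod>v \<in> tree_vertices k d - {[]}. edge_prob \<theta> (\<sigma> (tl v)) (\<sigma> v))"

definition Expt :: "nat \<Rightarrow> nat \<Rightarrow> real \<Rightarrow> ((nat list \<Rightarrow> nat) \<Rightarrow> real) \<Rightarrow> real" where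
  "Expt k d \<theta> f = (\<Sum>\<sigma>\<in>labelings k d. Wt k d \<theta> \<sigma> * f \<sigma>)"

definition Zs :: "nat \<Rightarrow> nat \<Rightarrow> (nat list \<Rightarrow> nat) \<Rightarrow> real" where
  "Zs k d \<sigma> = (\<Sum>v\<in>tree_leaves k d. Y (\<sigma> v))"

definition ind :: "(nat list \<Rightarrow> nat) \<Rightarrow> real" where
  "ind \<sigma> = (if \<sigma> [] = 1 then 1 else 0)"

definition mg :: "nat \<Rightarrow> nat \<Rightarrow> (nat list \<Rightarrow> nat) \<Rightarrow> (nat list \<Rightarrow> nat) \<Rightarrow> (nat list \<Rightarrow> nat)" where
  "mg k d \<tau> \<eta> = (\<lambda>v. if v \<in> tree_vertices k d then \<tau> v else \<eta> v)"

lemma V_Suc_minus: "tree_vertices k (Suc d) - {[]} = (tree_vertices k d - {[]}) \<union> tree_leaves k (Suc d)"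
  using V_Suc[of k d] root_notin_L[of k d] by auto

lemma Wt_mg:
  "Wt k (Suc d) \<theta> (mg k d \<tau> \<eta>) = Wt k d \<theta> \<tau> * (\<Prod>v\<in>tree_leaves k (Suc d). edge_prob \<theta> (\<tau> (tl v)) (\<eta> v))"
proof -
  have "Wt k (Suc d) \<theta> (mg k d \<tau> \<eta>) =
     (\<Prod>v \<in> tree_vertices k d - {[]}. edge_prob \<theta> (mg k d \<tau> \<eta> (tl v)) (mg k d \<tau> \<eta> v)) *
     (\<Prod>v \<in> tree_leaves k (Suc d). edge_prob \<theta> (mg k d \<tau> \<eta> (tl v)) (mg k d \<tau> \<eta> v))"
    unfolding Wt_def V_Suc_minus
    by (rule prod.union_disjoint) (use V_L_disj[of k d] in \<open>auto simp: fin_V fin_L\<close>)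
  also have "(\<Prod>v \<in> tree_vertices k d - {[]}. edge_prob \<theta> (mg k d \<tau> \<eta> (tl v)) (mg k d \<tau> \<eta> v))
     = Wt k d \<theta> \<tau>"
    unfolding Wt_def by (rule prod.cong) (auto simp: mg_def tl_V_in_V)
  also have "(\<Prod>v \<in> tree_leaves k (Suc d). edge_prob \<theta> (mg k d \<tau> \<eta> (tl v)) (mg k d \<tau> \<eta> v))
     = (\<Prod>v\<in>tree_leaves k (Suc d). edge_prob \<theta> (\<tau> (tl v)) (\<eta> v))"
    by (rule prod.cong) (use V_L_disj in \<open>auto simp: mg_def tl_L_in_V\<close>)
  finally show ?thesis .
qed

lemma Ex_Suc:
  "Expt k (Suc d) \<theta> G = (\<Sum>\<tau>\<in>labelings k d. Wt k d \<theta> \<tau> *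
     (\<Sum>\<eta>\<in>PiE (tree_leaves k (Suc d)) (\<lambda>_. {0,1}).
        (\<Prod>v\<in>tree_leaves k (Suc d). edge_prob \<theta> (\<tau> (tl v)) (\<eta> v)) * G (mg k d \<tau> \<eta>)))"
proof -
  have "Expt k (Suc d) \<theta> G = (\<Sum>\<tau>\<in>labelings k d. \<Sum>\<eta>\<in>PiE (tree_leaves k (Suc d)) (\<lambda>_. {0,1}).
      Wt k (Suc d) \<theta> (mg k d \<tau> \<eta>) * G (mg k d \<tau> \<eta>))"
    unfolding Expt_def labelings_def V_Suc mg_def
    by (rule PiE_split_sum[OF V_L_disj])
  then show ?thesis by (simp add: Wt_mg sum_distrib_left mult.assoc)
qed

lemma mg_root: "mg k d \<tau> \<eta> [] = \<tau> []"
  by (simp add: mg_def root_V)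

lemma ind_mg: "ind (mg k d \<tau> \<eta>) = ind \<tau>"
  by (simp add: ind_def mg_root)

lemma Zs_mg: "Zs k (Suc d) (mg k d \<tau> \<eta>) = (\<Sum>w\<in>tree_leaves k (Suc d). Y (\<eta> w))"
  unfolding Zs_def by (rule sum.cong) (use V_L_disj in \<open>auto simp: mg_def\<close>)

lemma lab_tl: "\<tau> \<in> labelings k d \<Longrightarrow> v \<in> tree_leaves k (Suc d) \<Longrightarrow> \<tau> (tl v) \<in> {0,1}"
  unfolding labelings_def using tl_L_in_V by (auto simp: PiE_def Pi_def)

lemma inner0_L: assumes "\<tau> \<in> labelings k d"
  shows "(\<Sum>\<eta>\<in>PiE (tree_leaves k (Suc d)) (\<lambda>_. {0,1}).
        (\<Prod>v\<in>tree_leaves k (Suc d). edge_prob \<theta> (\<tau> (tl v)) (\<eta> v))) = 1"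
  by (rule inner0[OF fin_L]) (rule lab_tl[OF assms])

lemma inner1_L: assumes "\<tau> \<in> labelings k d"
  shows "(\<Sum>\<eta>\<in>PiE (tree_leaves k (Suc d)) (\<lambda>_. {0,1}).
        (\<Prod>v\<in>tree_leaves k (Suc d). edge_prob \<theta> (\<tau> (tl v)) (\<eta> v)) * (\<Sum>w\<in>tree_leaves k (Suc d). Y (\<eta> w)))
     = \<theta> * (\<Sum>w\<in>tree_leaves k (Suc d). Y (\<tau> (tl w)))"
  by (rule inner1[OF fin_L]) (rule lab_tl[OF assms])

lemma inner2_L: assumes "\<tau> \<in> labelings k d"
  shows "(\<Sum>\<eta>\<in>PiE (tree_leaves k (Suc d)) (\<lambda>_. {0,1}).
        (\<Prod>v\<in>tree_leaves k (Suc d). edge_prob \<theta> (\<tau> (tl v)) (\<eta> v)) * (\<Sum>w\<in>tree_leaves k (Suc d). Y (\<eta> w))^2)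
     = \<theta>^2 * (\<Sum>w\<in>tree_leaves k (Suc d). Y (\<tau> (tl w)))^2 + (1 - \<theta>^2) * real (card (tree_leaves k (Suc d)))"
  by (rule inner2[OF fin_L]) (rule lab_tl[OF assms])

lemma sumY_tl: "(\<Sum>w\<in>tree_leaves k (Suc d). Y (\<tau> (tl w))) = real k * Zs k d \<tau>"
  unfolding Zs_def by (rule sum_L_Suc)

lemma Ex0_Suc: "Expt k (Suc d) \<theta> ind = Expt k d \<theta> ind"
proof -
  have "Expt k (Suc d) \<theta> ind = (\<Sum>\<tau>\<in>labelings k d. Wt k d \<theta> \<tau> * (ind \<tau> *
     (\<Sum>\<eta>\<in>PiE (tree_leaves k (Suc d)) (\<lambda>_. {0,1}).
        (\<Prod>v\<in>tree_leaves k (Suc d). edge_prob \<theta> (\<tau> (tl v)) (\<eta> v)))))"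
    unfolding Ex_Suc ind_mg by (simp add: sum_distrib_left mult_ac)
  also have "\<dots> = Expt k d \<theta> ind"
    unfolding Expt_def
    by (rule sum.cong[OF refl]) (subst inner0_L, assumption, auto)
  finally show ?thesis .
qed

lemma Ex1_Suc: "Expt k (Suc d) \<theta> (\<lambda>\<sigma>. ind \<sigma> * Zs k (Suc d) \<sigma>) = real k * \<theta> * Expt k d \<theta> (\<lambda>\<sigma>. ind \<sigma> * Zs k d \<sigma>)"
proof -
  have "Expt k (Suc d) \<theta> (\<lambda>\<sigma>. ind \<sigma> * Zs k (Suc d) \<sigma>) = (\<Sum>\<tau>\<in>labelings k d. Wt k d \<theta> \<tau> * (ind \<tau> *
     (\<Sum>\<eta>\<in>PiE (tree_leaves k (Suc d)) (\<lambda>_. {0,1}).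
        (\<Prod>v\<in>tree_leaves k (Suc d). edge_prob \<theta> (\<tau> (tl v)) (\<eta> v)) * (\<Sum>w\<in>tree_leaves k (Suc d). Y (\<eta> w)))))"
    unfolding Ex_Suc ind_mg Zs_mg by (simp add: sum_distrib_left sum_distrib_right mult_ac)
  also have "\<dots> = (\<Sum>\<tau>\<in>labelings k d. Wt k d \<theta> \<tau> * (ind \<tau> * (\<theta> * (real k * Zs k d \<tau>))))"
    by (rule sum.cong[OF refl]) (subst inner1_L, assumption, auto simp: sumY_tl)
  also have "\<dots> = real k * \<theta> * Expt k d \<theta> (\<lambda>\<sigma>. ind \<sigma> * Zs k d \<sigma>)"
    unfolding Expt_def by (simp add: sum_distrib_left mult_ac)
  finally show ?thesis .
qed

lemma Ex2_Suc: "Expt k (Suc d) \<theta> (\<lambda>\<sigma>. ind \<sigma> * Zs k (Suc d) \<sigma>^2) =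
   (real k * \<theta>)^2 * Expt k d \<theta> (\<lambda>\<sigma>. ind \<sigma> * Zs k d \<sigma>^2) + (1 - \<theta>^2) * real k ^ Suc d * Expt k d \<theta> ind"
proof -
  have "Expt k (Suc d) \<theta> (\<lambda>\<sigma>. ind \<sigma> * Zs k (Suc d) \<sigma>^2) = (\<Sum>\<tau>\<in>labelings k d. Wt k d \<theta> \<tau> * (ind \<tau> *
     (\<Sum>\<eta>\<in>PiE (tree_leaves k (Suc d)) (\<lambda>_. {0,1}).
        (\<Prod>v\<in>tree_leaves k (Suc d). edge_prob \<theta> (\<tau> (tl v)) (\<eta> v)) * (\<Sum>w\<in>tree_leaves k (Suc d). Y (\<eta> w))^2)))"
    unfolding Ex_Suc ind_mg Zs_mg by (simp add: sum_distrib_left sum_distrib_right mult_ac)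
  also have "\<dots> = (\<Sum>\<tau>\<in>labelings k d. Wt k d \<theta> \<tau> * (ind \<tau> * (\<theta>^2 * (real k * Zs k d \<tau>)^2 + (1 - \<theta>^2) * real k ^ Suc d)))"
    by (rule sum.cong[OF refl]) (subst inner2_L, assumption, auto simp: sumY_tl card_L)
  also have "\<dots> = (real k * \<theta>)^2 * Expt k d \<theta> (\<lambda>\<sigma>. ind \<sigma> * Zs k d \<sigma>^2) + (1 - \<theta>^2) * real k ^ Suc d * Expt k d \<theta> ind"
  proof -
    have "(\<Sum>\<tau>\<in>labelings k d. Wt k d \<theta> \<tau> * (ind \<tau> * (\<theta>^2 * (real k * Zs k d \<tau>)^2 + (1 - \<theta>^2) * real k ^ Suc d)))
      = (\<Sum>\<tau>\<in>labelings k d. (real k * \<theta>)^2 * (Wt k d \<theta> \<tau> * (ind \<tau> * Zs k d \<tau>^2)) + ((1 - \<theta>^2) * real k ^ Suc d) * (Wt k d \<theta> \<tau> * ind \<tau>))"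
      by (rule sum.cong[OF refl]) (simp add: algebra_simps power2_eq_square)
    also have "\<dots> = (real k * \<theta>)^2 * Expt k d \<theta> (\<lambda>\<sigma>. ind \<sigma> * Zs k d \<sigma>^2) + (1 - \<theta>^2) * real k ^ Suc d * Expt k d \<theta> ind"
      unfolding Expt_def by (simp only: sum.distrib sum_distrib_left[symmetric])
    finally show ?thesis .
  qed
  finally show ?thesis .
qed

lemma V0: "tree_vertices k 0 = {[]}"
  unfolding tree_vertices_def by auto

lemma L0: "tree_leaves k 0 = {[]}"
  unfolding tree_leaves_def by auto

lemma lab0: "labelings k 0 = (\<lambda>s. (\<lambda>_. undefined)([] := s)) ` {0,1}"
  unfolding labelings_def V0 using PiE_insert_eq[of "[]" "{}" "\<lambda>_. {0::nat,1}"] by auto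

lemma Ex0: "Expt k 0 \<theta> f = f ((\<lambda>_. undefined)([] := 0)) + f ((\<lambda>_. undefined)([] := 1))"
proof -
  have inj: "inj_on (\<lambda>s::nat. (\<lambda>_. undefined)([] := s)) {0,1}"
    by (auto simp: inj_on_def fun_eq_iff)
  have W: "Wt k 0 \<theta> \<sigma> = 1" for \<sigma> unfolding Wt_def V0 by simp
  have ne: "(\<lambda>_. undefined)([] := 0::nat) \<noteq> (\<lambda>_. undefined)([] := 1)"
    by (auto simp: fun_eq_iff)
  have "Expt k 0 \<theta> f = (\<Sum>\<sigma>\<in>{(\<lambda>_. undefined)([] := 0::nat), (\<lambda>_. undefined)([] := 1)}. f \<sigma>)"
    unfolding Expt_def lab0 W by simp
  also have "\<dots> = f ((\<lambda>_. undefined)([] := 0)) + f ((\<lambda>_. undefined)([] := 1))"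
    by (rule sum.insert_if[THEN trans]) (use ne in auto)
  finally show ?thesis .
qed

lemma E0: "Expt k d \<theta> ind = 1"
  by (induction d) (simp add: Ex0 ind_def, simp only: Ex0_Suc)

lemma E1: "Expt k d \<theta> (\<lambda>\<sigma>. ind \<sigma> * Zs k d \<sigma>) = (real k * \<theta>) ^ d"
  by (induction d) (simp add: Ex0 ind_def Zs_def L0 Y_def, simp only: Ex1_Suc power_Suc mult.assoc)

lemma E2:
  assumes D: "D = real k * \<theta>^2 - 1"
  shows "D * Expt k d \<theta> (\<lambda>\<sigma>. ind \<sigma> * Zs k d \<sigma>^2) = (D + 1 - \<theta>^2) * ((real k * \<theta>)^2)^d - (1 - \<theta>^2) * real k ^ d"
proof (induction d)
  case 0
  then show ?case by (simp add: Ex0 ind_def Zs_def L0 Y_def)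
next
  case (Suc d)
  have "D * Expt k (Suc d) \<theta> (\<lambda>\<sigma>. ind \<sigma> * Zs k (Suc d) \<sigma>^2) =
     (real k * \<theta>)^2 * (D * Expt k d \<theta> (\<lambda>\<sigma>. ind \<sigma> * Zs k d \<sigma>^2)) + D * (1 - \<theta>^2) * real k ^ Suc d"
    by (simp add: Ex2_Suc E0 algebra_simps)
  also have "\<dots> = (real k * \<theta>)^2 * ((D + 1 - \<theta>^2) * ((real k * \<theta>)^2)^d - (1 - \<theta>^2) * real k ^ d) + D * (1 - \<theta>^2) * real k ^ Suc d"
    using Suc by simp
  also have "\<dots> = (D + 1 - \<theta>^2) * ((real k * \<theta>)^2)^Suc d - (1 - \<theta>^2) * real k ^ Suc d"
    unfolding D by (simp add: algebra_simps power2_eq_square)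
  finally show ?case .
qed

lemma fin_lab: "finite (labelings k d)"
  unfolding labelings_def by (rule finite_PiE) (auto simp: fin_V)

lemma Wt_nonneg: "0 \<le> \<theta> \<Longrightarrow> \<theta> \<le> 1 \<Longrightarrow> 0 \<le> Wt k d \<theta> \<sigma>"
  unfolding Wt_def by (rule prod_nonneg) (auto simp: edge_prob_def)

lemma Zs_sum: assumes "\<sigma> \<in> labelings k d"
  shows "Zs k d \<sigma> = 2 * real (\<Sum>v \<in> tree_leaves k d. \<sigma> v) - real k ^ d"
proof -
  have "Zs k d \<sigma> = (\<Sum>v \<in> tree_leaves k d. 2 * real (\<sigma> v) - 1)"
    unfolding Zs_def Y_def ..
  also have "\<dots> = 2 * real (\<Sum>v \<in> tree_leaves k d. \<sigma> v) - real (card (tree_leaves k d))"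
    by (simp add: sum_subtractf sum_distrib_left)
  finally show ?thesis by (simp add: card_L)
qed

theorem mainTheorem10:
  fixes d k :: nat and \<theta> :: real
  assumes "k \<ge> 2" and "0 < \<theta>" and "\<theta> \<le> 1" and "real k * \<theta>^2 > 2"
  shows "broadcast_cond_prob k d \<theta>
           (\<lambda>\<sigma>. real (\<Sum>v \<in> tree_leaves k d. \<sigma> v) \<le> real k ^ d / 2)
           (\<lambda>\<sigma>. \<sigma> [] = 1)
         \<le> 1 / (\<theta>^2 * real k - 1)"
proof -
  define D where "D = real k * \<theta>^2 - 1"
  have Dpos: "D > 0" using assms(4) unfolding D_def by simp
  define m where "m = (real k * \<theta>)^d"
  have mpos: "m > 0" unfolding m_def using assms(1,2) by simp
  let ?E = "\<lambda>\<sigma>. real (\<Sum>v \<in> tree_leaves k d. \<sigma> v) \<le> real k ^ d / 2"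
  have bw: "broadcast_weight k d \<theta> \<sigma> = Wt k d \<theta> \<sigma> / 2" for \<sigma>
    unfolding broadcast_weight_def Wt_def by simp
  have Wnn: "0 \<le> Wt k d \<theta> \<sigma>" for \<sigma> using Wt_nonneg assms(2,3) by simp
  have PF: "broadcast_prob k d \<theta> (\<lambda>\<sigma>. \<sigma> [] = 1) = 1/2"
  proof -
    have "broadcast_prob k d \<theta> (\<lambda>\<sigma>. \<sigma> [] = 1) = (\<Sum>\<sigma>\<in>labelings k d. if \<sigma> [] = 1 then Wt k d \<theta> \<sigma> / 2 else 0)"
      unfolding broadcast_prob_def bw by (rule sum.inter_filter[OF fin_lab])
    also have "\<dots> = Expt k d \<theta> ind / 2"
      unfolding Expt_def ind_def sum_divide_distrib by (rule sum.cong) auto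
    finally show ?thesis by (simp add: E0)
  qed
  have PEF: "broadcast_prob k d \<theta> (\<lambda>\<sigma>. ?E \<sigma> \<and> \<sigma> [] = 1)
      \<le> (Expt k d \<theta> (\<lambda>\<sigma>. ind \<sigma> * Zs k d \<sigma>^2) - m^2) / (2 * m^2)"
  proof -
    have "broadcast_prob k d \<theta> (\<lambda>\<sigma>. ?E \<sigma> \<and> \<sigma> [] = 1) = (\<Sum>\<sigma>\<in>labelings k d. if ?E \<sigma> \<and> \<sigma> [] = 1 then Wt k d \<theta> \<sigma> / 2 else 0)"
      unfolding broadcast_prob_def bw by (rule sum.inter_filter[OF fin_lab])
    also have "\<dots> \<le> (\<Sum>\<sigma>\<in>labelings k d. Wt k d \<theta> \<sigma> * (ind \<sigma> * (Zs k d \<sigma> - m)^2) / (2 * m^2))"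
    proof (rule sum_mono)
      fix \<sigma> assume s: "\<sigma> \<in> labelings k d"
      show "(if ?E \<sigma> \<and> \<sigma> [] = 1 then Wt k d \<theta> \<sigma> / 2 else 0) \<le> Wt k d \<theta> \<sigma> * (ind \<sigma> * (Zs k d \<sigma> - m)^2) / (2 * m^2)"
      proof (cases "?E \<sigma> \<and> \<sigma> [] = 1")
        case True
        then have "Zs k d \<sigma> \<le> 0" using Zs_sum[OF s] by simp
        then have "0 \<le> Zs k d \<sigma> * (Zs k d \<sigma> - 2 * m)" using mpos
          by (intro mult_nonpos_nonpos) auto
        then have "m^2 \<le> (Zs k d \<sigma> - m)^2"
          by (simp add: power2_eq_square algebra_simps)
        then have "Wt k d \<theta> \<sigma> * m^2 \<le> Wt k d \<theta> \<sigma> * (Zs k d \<sigma> - m)^2"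
          using Wnn by (rule mult_left_mono)
        then show ?thesis using True mpos by (simp add: ind_def field_simps)
      next
        case False
        have "0 \<le> ind \<sigma>" by (simp add: ind_def)
        then have "0 \<le> Wt k d \<theta> \<sigma> * (ind \<sigma> * (Zs k d \<sigma> - m)^2) / (2 * m^2)"
          using Wnn by simp
        then show ?thesis using False by (simp only: if_False)
      qed
    qed
    also have "\<dots> = (Expt k d \<theta> (\<lambda>\<sigma>. ind \<sigma> * Zs k d \<sigma>^2) - 2 * m * Expt k d \<theta> (\<lambda>\<sigma>. ind \<sigma> * Zs k d \<sigma>)
        + m^2 * Expt k d \<theta> ind) / (2 * m^2)"
    proof -
      have "(\<Sum>\<sigma>\<in>labelings k d. Wt k d \<theta> \<sigma> * (ind \<sigma> * (Zs k d \<sigma> - m)^2))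
        = (\<Sum>\<sigma>\<in>labelings k d. Wt k d \<theta> \<sigma> * (ind \<sigma> * Zs k d \<sigma>^2) - 2 * m * (Wt k d \<theta> \<sigma> * (ind \<sigma> * Zs k d \<sigma>))
            + m^2 * (Wt k d \<theta> \<sigma> * ind \<sigma>))"
        by (rule sum.cong[OF refl]) (simp add: algebra_simps power2_eq_square)
      also have "\<dots> = Expt k d \<theta> (\<lambda>\<sigma>. ind \<sigma> * Zs k d \<sigma>^2) - 2 * m * Expt k d \<theta> (\<lambda>\<sigma>. ind \<sigma> * Zs k d \<sigma>)
        + m^2 * Expt k d \<theta> ind"
        unfolding Expt_def by (simp only: sum.distrib sum_subtractf sum_distrib_left[symmetric])
      finally show ?thesis by (simp add: sum_divide_distrib[symmetric])
    qed
    also have "\<dots> = (Expt k d \<theta> (\<lambda>\<sigma>. ind \<sigma> * Zs k d \<sigma>^2) - m^2) / (2 * m^2)"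
      by (simp add: E0 E1 m_def power2_eq_square)
    finally show ?thesis .
  qed
  have E2': "D * Expt k d \<theta> (\<lambda>\<sigma>. ind \<sigma> * Zs k d \<sigma>^2) = (D + 1 - \<theta>^2) * m^2 - (1 - \<theta>^2) * real k ^ d"
    using E2[OF D_def, of d] unfolding m_def by (simp add: power_mult[symmetric] power_mult_distrib mult.commute)
  have "broadcast_cond_prob k d \<theta> ?E (\<lambda>\<sigma>. \<sigma> [] = 1) \<le> (Expt k d \<theta> (\<lambda>\<sigma>. ind \<sigma> * Zs k d \<sigma>^2) - m^2) / m^2"
    unfolding broadcast_cond_prob_def PF using PEF mpos by (simp add: field_simps)
  also have "\<dots> \<le> 1 / D"
  proof -
    have th: "(1 - \<theta>^2) * real k ^ d \<ge> 0" using assms(2,3) by (simp add: power_le_one)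
    have "D * (Expt k d \<theta> (\<lambda>\<sigma>. ind \<sigma> * Zs k d \<sigma>^2) - m^2) \<le> m^2"
    proof -
      have "0 \<le> \<theta>^2 * m^2" by simp
      moreover have "D * (Expt k d \<theta> (\<lambda>\<sigma>. ind \<sigma> * Zs k d \<sigma>^2) - m^2) = m^2 - \<theta>^2 * m^2 - (1 - \<theta>^2) * real k ^ d"
        using E2' by (simp add: algebra_simps)
      ultimately show ?thesis using th by linarith
    qed
    then show ?thesis using Dpos mpos by (simp add: field_simps)
  qed
  finally show ?thesis unfolding D_def by (simp add: mult.commute)
qed

end
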